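(* Let $(\mathcal C,S,T)$ be a unital association schemoid. (i) For every $\sigma\in S$ there exists a unique $\alpha\in S_0$ with $p^\sigma_{\sigma\alpha}=1$; moreover $p^\sigma_{\sigma\alpha'}=0$ for all $\alpha'\in S_0$ with $\alpha'\neq\alpha$. (ii) For every $\sigma\in S$ there exists a unique $\beta\in S_0$ with $p^\sigma_{\beta\sigma}=1$; moreover $p^\sigma_{\beta'\sigma}=0$ for all $\beta'\in S_0$ with $\beta'\neq\beta$.
   Context: Write $s(f),t(f)$ for source and target. A quasi-schemoid is a pair $(\mathcal C,S)$ with $\mathcal C$ a small category and $S$ a partition of $mor(\mathcal C)$ into nonempty blocks such that for all $\sigma,\tau,\mu\in S$ and $f,g\in\mu$ the sets $\{(a,b)\in\sigma\times\tau: s(a)=t(b), a\circ b=f\}$ and the analogous set for $g$ have equal cardinality, denoted $p^\mu_{\sigma\tau}$ (structure constant). An association schemoid is a triple $(\mathcal C,S,T)$ where $(\mathcal C,S)$ is a quasi-schemoid, every block of $S$ containing an endomorphism consists only of endomorphisms, and $T:\mathcal C\to\mathcal C$ is a contravariant functor with $T^2=\mathrm{id}$ and $\{T(f):f\in\sigma\}\in S$ for all $\sigma\in S$. With $J_0=\{1_x:x\in ob(\mathcal C)\}$, it is unital if every block meeting $J_0$ is contained in $J_0$. $S_0=\{\alpha\in S:\alpha\cap J_0\neq\emptyset\}$. *)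

theory Defs
  imports Main "HOL-Library.Equipollence" "HOL-Library.Disjoint_Sets" "HOL-Library.Extended_Nat"
begin

text \<open>A small category given explicitly by its object set, morphism set,
  source (Dom), target (Cod), identities and composition (Comp a b = a \<circ> b,
  defined when Dom a = Cod b).\<close>

record ('o, 'm) cat =
  Ob   :: "'o set"
  Mor  :: "'m set"
  Dom  :: "'m \<Rightarrow> 'o"
  Cod  :: "'m \<Rightarrow> 'o"
  Id   :: "'o \<Rightarrow> 'm"
  Comp :: "'m \<Rightarrow> 'm \<Rightarrow> 'm"

definition is_category :: "('o, 'm) cat \<Rightarrow> bool" where
  "is_category C \<longleftrightarrow>
     (\<forall>f\<in>Mor C. Dom C f \<in> Ob C \<and> Cod C f \<in> Ob C) \<and>
     (\<forall>x\<in>Ob C. Id C x \<in> Mor C \<and> Dom C (Id C x) = x \<and> Cod C (Id C x) = x) \<and>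
     (\<forall>f\<in>Mor C. \<forall>g\<in>Mor C. Dom C f = Cod C g \<longrightarrow>
         Comp C f g \<in> Mor C \<and> Dom C (Comp C f g) = Dom C g \<and> Cod C (Comp C f g) = Cod C f) \<and>
     (\<forall>f\<in>Mor C. \<forall>g\<in>Mor C. \<forall>h\<in>Mor C. Dom C f = Cod C g \<longrightarrow> Dom C g = Cod C h \<longrightarrow>
         Comp C (Comp C f g) h = Comp C f (Comp C g h)) \<and>
     (\<forall>f\<in>Mor C. Comp C f (Id C (Dom C f)) = f \<and> Comp C (Id C (Cod C f)) f = f)"

definition pset :: "('o, 'm) cat \<Rightarrow> 'm set \<Rightarrow> 'm set \<Rightarrow> 'm \<Rightarrow> ('m \<times> 'm) set" where
  "pset C \<sigma> \<tau> f = {(a, b). a \<in> \<sigma> \<and> b \<in> \<tau> \<and> Dom C a = Cod C b \<and> Comp C a b = f}"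

definition quasi_schemoid :: "('o, 'm) cat \<Rightarrow> 'm set set \<Rightarrow> bool" where
  "quasi_schemoid C S \<longleftrightarrow> is_category C \<and> partition_on (Mor C) S \<and>
     (\<forall>\<sigma>\<in>S. \<forall>\<tau>\<in>S. \<forall>\<mu>\<in>S. \<forall>f\<in>\<mu>. \<forall>g\<in>\<mu>. pset C \<sigma> \<tau> f \<approx> pset C \<sigma> \<tau> g)"

text \<open>Structure constant p^mu_{sigma tau}, as an extended natural number
  (infinite cardinalities are all recorded as infinity; irrelevant for values 0 and 1).\<close>

definition pconst :: "('o, 'm) cat \<Rightarrow> 'm set \<Rightarrow> 'm set \<Rightarrow> 'm set \<Rightarrow> enat" where
  "pconst C \<sigma> \<tau> \<mu> =
     (let A = pset C \<sigma> \<tau> (SOME f. f \<in> \<mu>) in if finite A then enat (card A) else \<infinity>)"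

definition contravariant_functor :: "('o, 'm) cat \<Rightarrow> ('o \<Rightarrow> 'o) \<Rightarrow> ('m \<Rightarrow> 'm) \<Rightarrow> bool" where
  "contravariant_functor C To Tm \<longleftrightarrow>
     (\<forall>x\<in>Ob C. To x \<in> Ob C) \<and>
     (\<forall>f\<in>Mor C. Tm f \<in> Mor C \<and> Dom C (Tm f) = To (Cod C f) \<and> Cod C (Tm f) = To (Dom C f)) \<and>
     (\<forall>x\<in>Ob C. Tm (Id C x) = Id C (To x)) \<and>
     (\<forall>f\<in>Mor C. \<forall>g\<in>Mor C. Dom C f = Cod C g \<longrightarrow> Tm (Comp C f g) = Comp C (Tm g) (Tm f))"

definition association_schemoid ::
  "('o, 'm) cat \<Rightarrow> 'm set set \<Rightarrow> ('o \<Rightarrow> 'o) \<Rightarrow> ('m \<Rightarrow> 'm) \<Rightarrow> bool" where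
  "association_schemoid C S To Tm \<longleftrightarrow>
     quasi_schemoid C S \<and>
     (\<forall>\<sigma>\<in>S. (\<exists>f\<in>\<sigma>. Dom C f = Cod C f) \<longrightarrow> (\<forall>f\<in>\<sigma>. Dom C f = Cod C f)) \<and>
     contravariant_functor C To Tm \<and>
     (\<forall>x\<in>Ob C. To (To x) = x) \<and> (\<forall>f\<in>Mor C. Tm (Tm f) = f) \<and>
     (\<forall>\<sigma>\<in>S. Tm ` \<sigma> \<in> S)"

definition J0 :: "('o, 'm) cat \<Rightarrow> 'm set" where
  "J0 C = Id C ` Ob C"

definition unital :: "('o, 'm) cat \<Rightarrow> 'm set set \<Rightarrow> bool" where
  "unital C S \<longleftrightarrow> (\<forall>\<sigma>\<in>S. \<sigma> \<inter> J0 C \<noteq> {} \<longrightarrow> \<sigma> \<subseteq> J0 C)"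

definition S0 :: "('o, 'm) cat \<Rightarrow> 'm set set \<Rightarrow> 'm set set" where
  "S0 C S = {\<alpha>\<in>S. \<alpha> \<inter> J0 C \<noteq> {}}"

end

theory Submission
  imports Defs
begin

lemma part_facts:
  assumes "partition_on A P"
  shows "\<And>x. x \<in> A \<Longrightarrow> \<exists>p\<in>P. x \<in> p"
    and "\<And>p q x. p \<in> P \<Longrightarrow> q \<in> P \<Longrightarrow> x \<in> p \<Longrightarrow> x \<in> q \<Longrightarrow> p = q"
    and "\<And>p. p \<in> P \<Longrightarrow> p \<noteq> {}"
    and "\<And>p. p \<in> P \<Longrightarrow> p \<subseteq> A"
  using assms unfolding partition_on_def disjoint_def by blast+

lemma pconst_one_zero:
  assumes "finite A" shows "A = {z} \<Longrightarrow> (if finite A then enat (card A) else \<infinity>) = 1"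
    and "A = {} \<Longrightarrow> (if finite A then enat (card A) else \<infinity>) = 0"
  by (auto simp: one_enat_def zero_enat_def)

theorem lemma4p2:
  fixes C :: "('o, 'm) cat" and S :: "'m set set"
    and To :: "'o \<Rightarrow> 'o" and Tm :: "'m \<Rightarrow> 'm"
  assumes "association_schemoid C S To Tm"
    and "unital C S"
  shows "(\<forall>\<sigma>\<in>S.
           (\<exists>!\<alpha>. \<alpha> \<in> S0 C S \<and> pconst C \<sigma> \<alpha> \<sigma> = 1) \<and>
           (\<forall>\<alpha>\<in>S0 C S. pconst C \<sigma> \<alpha> \<sigma> = 1 \<longrightarrow>
              (\<forall>\<alpha>'\<in>S0 C S. \<alpha>' \<noteq> \<alpha> \<longrightarrow> pconst C \<sigma> \<alpha>' \<sigma> = 0))) \<and>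
         (\<forall>\<sigma>\<in>S.
           (\<exists>!\<beta>. \<beta> \<in> S0 C S \<and> pconst C \<beta> \<sigma> \<sigma> = 1) \<and>
           (\<forall>\<beta>\<in>S0 C S. pconst C \<beta> \<sigma> \<sigma> = 1 \<longrightarrow>
              (\<forall>\<beta>'\<in>S0 C S. \<beta>' \<noteq> \<beta> \<longrightarrow> pconst C \<beta>' \<sigma> \<sigma> = 0)))"
proof -
  have cat: "is_category C" and part: "partition_on (Mor C) S"
    using assms(1) unfolding association_schemoid_def quasi_schemoid_def by auto
  note P = part_facts[OF part]
  have S0sub: "\<And>\<alpha>. \<alpha> \<in> S0 C S \<Longrightarrow> \<alpha> \<subseteq> Id C ` Ob C"
    using assms(2) unfolding unital_def S0_def J0_def by blast
  have ob: "\<And>f. f \<in> Mor C \<Longrightarrow> Dom C f \<in> Ob C \<and> Cod C f \<in> Ob C"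
    and idm: "\<And>x. x \<in> Ob C \<Longrightarrow> Id C x \<in> Mor C \<and> Dom C (Id C x) = x \<and> Cod C (Id C x) = x"
    and unitl: "\<And>f. f \<in> Mor C \<Longrightarrow> Comp C f (Id C (Dom C f)) = f \<and> Comp C (Id C (Cod C f)) f = f"
    using cat unfolding is_category_def by blast+
  have inS0: "\<And>\<alpha> x. \<alpha> \<in> S \<Longrightarrow> x \<in> Ob C \<Longrightarrow> Id C x \<in> \<alpha> \<Longrightarrow> \<alpha> \<in> S0 C S"
    unfolding S0_def J0_def by blast
  have main: "(\<exists>!\<alpha>. \<alpha> \<in> S0 C S \<and> pconst C \<sigma> \<alpha> \<sigma> = 1) \<and>
    (\<forall>\<alpha>\<in>S0 C S. pconst C \<sigma> \<alpha> \<sigma> = 1 \<longrightarrow> (\<forall>\<alpha>'\<in>S0 C S. \<alpha>' \<noteq> \<alpha> \<longrightarrow> pconst C \<sigma> \<alpha>' \<sigma> = 0)) \<and>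
    (\<exists>!\<beta>. \<beta> \<in> S0 C S \<and> pconst C \<beta> \<sigma> \<sigma> = 1) \<and>
    (\<forall>\<beta>\<in>S0 C S. pconst C \<beta> \<sigma> \<sigma> = 1 \<longrightarrow> (\<forall>\<beta>'\<in>S0 C S. \<beta>' \<noteq> \<beta> \<longrightarrow> pconst C \<beta>' \<sigma> \<sigma> = 0))"
    if s: "\<sigma> \<in> S" for \<sigma>
  proof (intro conjI)
    define f0 where "f0 = (SOME f. f \<in> \<sigma>)"
    have f0: "f0 \<in> \<sigma>" unfolding f0_def using P(3)[OF s] by (metis some_in_eq)
    have f0m: "f0 \<in> Mor C" using P(4)[OF s] f0 by blast
    note d = ob[OF f0m] idm[OF conjunct1[OF ob[OF f0m]]] idm[OF conjunct2[OF ob[OF f0m]]] unitl[OF f0m]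
    have ps1: "pset C \<sigma> \<alpha> f0 = (if Id C (Dom C f0) \<in> \<alpha> then {(f0, Id C (Dom C f0))} else {})"
      if a: "\<alpha> \<in> S0 C S" for \<alpha>
    proof -
      have "\<And>a b. b \<in> \<alpha> \<Longrightarrow> Dom C a = Cod C b \<Longrightarrow> a \<in> Mor C \<Longrightarrow> Comp C a b = a \<and> b = Id C (Dom C a)"
        using S0sub[OF a] idm unitl by fastforce
      note k = this
      show ?thesis
      proof (cases "Id C (Dom C f0) \<in> \<alpha>")
        case True
        have "pset C \<sigma> \<alpha> f0 = {(f0, Id C (Dom C f0))}"
        proof (rule set_eqI, clarify)
          fix a b
          show "((a, b) \<in> pset C \<sigma> \<alpha> f0) = ((a, b) \<in> {(f0, Id C (Dom C f0))})"
          proof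
            assume "(a, b) \<in> pset C \<sigma> \<alpha> f0"
            then have "a \<in> \<sigma>" "b \<in> \<alpha>" "Dom C a = Cod C b" "Comp C a b = f0" unfolding pset_def by auto
            moreover have "a \<in> Mor C" using P(4)[OF s] \<open>a \<in> \<sigma>\<close> by blast
            ultimately have e: "Comp C a b = a" "b = Id C (Dom C a)" "Comp C a b = f0" using k[of b a] by auto
            then show "(a, b) \<in> {(f0, Id C (Dom C f0))}" by auto
          next
            assume "(a, b) \<in> {(f0, Id C (Dom C f0))}"
            then show "(a, b) \<in> pset C \<sigma> \<alpha> f0" unfolding pset_def using True f0 d by auto
          qed
        qed
        then show ?thesis using True by simp
      next
        case False
        have "pset C \<sigma> \<alpha> f0 = {}"
        proof (rule equals0I, clarify)
          fix a b assume "(a, b) \<in> pset C \<sigma> \<alpha> f0"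
          then have "a \<in> \<sigma>" "b \<in> \<alpha>" "Dom C a = Cod C b" "Comp C a b = f0" unfolding pset_def by auto
          moreover have "a \<in> Mor C" using P(4)[OF s] \<open>a \<in> \<sigma>\<close> by blast
          ultimately have e: "Comp C a b = a" "b = Id C (Dom C a)" "Comp C a b = f0" "b \<in> \<alpha>" using k[of b a] by auto
          then show False using False by auto
        qed
        then show ?thesis using False by simp
      qed
    qed
    have pc1: "pconst C \<sigma> \<alpha> \<sigma> = (if Id C (Dom C f0) \<in> \<alpha> then 1 else 0)"
      if a: "\<alpha> \<in> S0 C S" for \<alpha>
      unfolding pconst_def Let_def f0_def[symmetric] ps1[OF a]
      by (auto simp: one_enat_def zero_enat_def)
    have ps2: "pset C \<beta> \<sigma> f0 = (if Id C (Cod C f0) \<in> \<beta> then {(Id C (Cod C f0), f0)} else {})"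
      if a: "\<beta> \<in> S0 C S" for \<beta>
    proof -
      have "\<And>a b. a \<in> \<beta> \<Longrightarrow> Dom C a = Cod C b \<Longrightarrow> b \<in> Mor C \<Longrightarrow> Comp C a b = b \<and> a = Id C (Cod C b)"
        using S0sub[OF a] idm unitl by fastforce
      note k = this
      show ?thesis
      proof (cases "Id C (Cod C f0) \<in> \<beta>")
        case True
        have "pset C \<beta> \<sigma> f0 = {(Id C (Cod C f0), f0)}"
        proof (rule set_eqI, clarify)
          fix a b
          show "((a, b) \<in> pset C \<beta> \<sigma> f0) = ((a, b) \<in> {(Id C (Cod C f0), f0)})"
          proof
            assume "(a, b) \<in> pset C \<beta> \<sigma> f0"
            then have "a \<in> \<beta>" "b \<in> \<sigma>" "Dom C a = Cod C b" "Comp C a b = f0" unfolding pset_def by auto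
            moreover have "b \<in> Mor C" using P(4)[OF s] \<open>b \<in> \<sigma>\<close> by blast
            ultimately have e: "Comp C a b = b" "a = Id C (Cod C b)" "Comp C a b = f0" using k[of a b] by auto
            then show "(a, b) \<in> {(Id C (Cod C f0), f0)}" by auto
          next
            assume "(a, b) \<in> {(Id C (Cod C f0), f0)}"
            then show "(a, b) \<in> pset C \<beta> \<sigma> f0" unfolding pset_def using True f0 d by auto
          qed
        qed
        then show ?thesis using True by simp
      next
        case False
        have "pset C \<beta> \<sigma> f0 = {}"
        proof (rule equals0I, clarify)
          fix a b assume "(a, b) \<in> pset C \<beta> \<sigma> f0"
          then have "a \<in> \<beta>" "b \<in> \<sigma>" "Dom C a = Cod C b" "Comp C a b = f0" unfolding pset_def by auto
          moreover have "b \<in> Mor C" using P(4)[OF s] \<open>b \<in> \<sigma>\<close> by blast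
          ultimately have e: "Comp C a b = b" "a = Id C (Cod C b)" "Comp C a b = f0" "a \<in> \<beta>" using k[of a b] by auto
          then show False using False by auto
        qed
        then show ?thesis using False by simp
      qed
    qed
    have pc2: "pconst C \<beta> \<sigma> \<sigma> = (if Id C (Cod C f0) \<in> \<beta> then 1 else 0)"
      if a: "\<beta> \<in> S0 C S" for \<beta>
      unfolding pconst_def Let_def f0_def[symmetric] ps2[OF a]
      by (auto simp: one_enat_def zero_enat_def)
    obtain \<alpha> where a: "\<alpha> \<in> S" "Id C (Dom C f0) \<in> \<alpha>" using P(1) d by blast
    obtain \<beta> where b: "\<beta> \<in> S" "Id C (Cod C f0) \<in> \<beta>" using P(1) d by blast
    have aS0: "\<alpha> \<in> S0 C S" using inS0 a d by blast
    have bS0: "\<beta> \<in> S0 C S" using inS0 b d by blast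
    have uA: "\<And>\<alpha>'. \<alpha>' \<in> S0 C S \<Longrightarrow> Id C (Dom C f0) \<in> \<alpha>' \<Longrightarrow> \<alpha>' = \<alpha>"
      using P(2) a unfolding S0_def by blast
    have uB: "\<And>\<alpha>'. \<alpha>' \<in> S0 C S \<Longrightarrow> Id C (Cod C f0) \<in> \<alpha>' \<Longrightarrow> \<alpha>' = \<beta>"
      using P(2) b unfolding S0_def by blast
    have one1: "pconst C \<sigma> \<alpha> \<sigma> = 1" using pc1[OF aS0] a(2) by simp
    have z1: "pconst C \<sigma> \<alpha>' \<sigma> = 0" if "\<alpha>' \<in> S0 C S" "\<alpha>' \<noteq> \<alpha>" for \<alpha>'
      using pc1[OF that(1)] uA[OF that(1)] that(2) by (simp split: if_splits)
    have one2: "pconst C \<beta> \<sigma> \<sigma> = 1" using pc2[OF bS0] b(2) by simp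
    have z2: "pconst C \<beta>' \<sigma> \<sigma> = 0" if "\<beta>' \<in> S0 C S" "\<beta>' \<noteq> \<beta>" for \<beta>'
      using pc2[OF that(1)] uB[OF that(1)] that(2) by (simp split: if_splits)
    have ne: "(0::enat) \<noteq> 1" by simp
    show "\<exists>!\<alpha>. \<alpha> \<in> S0 C S \<and> pconst C \<sigma> \<alpha> \<sigma> = 1"
      using aS0 one1 z1 ne by metis
    show "\<forall>\<alpha>\<in>S0 C S. pconst C \<sigma> \<alpha> \<sigma> = 1 \<longrightarrow> (\<forall>\<alpha>'\<in>S0 C S. \<alpha>' \<noteq> \<alpha> \<longrightarrow> pconst C \<sigma> \<alpha>' \<sigma> = 0)"
      using aS0 one1 z1 ne by metis
    show "\<exists>!\<beta>. \<beta> \<in> S0 C S \<and> pconst C \<beta> \<sigma> \<sigma> = 1"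
      using bS0 one2 z2 ne by metis
    show "\<forall>\<beta>\<in>S0 C S. pconst C \<beta> \<sigma> \<sigma> = 1 \<longrightarrow> (\<forall>\<beta>'\<in>S0 C S. \<beta>' \<noteq> \<beta> \<longrightarrow> pconst C \<beta>' \<sigma> \<sigma> = 0)"
      using bS0 one2 z2 ne by metis
  qed
  show ?thesis
  proof (rule conjI)
    show "\<forall>\<sigma>\<in>S. (\<exists>!\<alpha>. \<alpha> \<in> S0 C S \<and> pconst C \<sigma> \<alpha> \<sigma> = 1) \<and>
           (\<forall>\<alpha>\<in>S0 C S. pconst C \<sigma> \<alpha> \<sigma> = 1 \<longrightarrow>
              (\<forall>\<alpha>'\<in>S0 C S. \<alpha>' \<noteq> \<alpha> \<longrightarrow> pconst C \<sigma> \<alpha>' \<sigma> = 0))"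
    proof (rule ballI)
      fix \<sigma> assume h: "\<sigma> \<in> S"
      note m = main[OF h]
      show "(\<exists>!\<alpha>. \<alpha> \<in> S0 C S \<and> pconst C \<sigma> \<alpha> \<sigma> = 1) \<and>
           (\<forall>\<alpha>\<in>S0 C S. pconst C \<sigma> \<alpha> \<sigma> = 1 \<longrightarrow>
              (\<forall>\<alpha>'\<in>S0 C S. \<alpha>' \<noteq> \<alpha> \<longrightarrow> pconst C \<sigma> \<alpha>' \<sigma> = 0))"
        by (rule conjI[OF conjunct1[OF m] conjunct1[OF conjunct2[OF m]]])
    qed
    show "\<forall>\<sigma>\<in>S. (\<exists>!\<beta>. \<beta> \<in> S0 C S \<and> pconst C \<beta> \<sigma> \<sigma> = 1) \<and>
           (\<forall>\<beta>\<in>S0 C S. pconst C \<beta> \<sigma> \<sigma> = 1 \<longrightarrow>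
              (\<forall>\<beta>'\<in>S0 C S. \<beta>' \<noteq> \<beta> \<longrightarrow> pconst C \<beta>' \<sigma> \<sigma> = 0))"
    proof (rule ballI)
      fix \<sigma> assume h: "\<sigma> \<in> S"
      note m = main[OF h]
      show "(\<exists>!\<beta>. \<beta> \<in> S0 C S \<and> pconst C \<beta> \<sigma> \<sigma> = 1) \<and>
           (\<forall>\<beta>\<in>S0 C S. pconst C \<beta> \<sigma> \<sigma> = 1 \<longrightarrow>
              (\<forall>\<beta>'\<in>S0 C S. \<beta>' \<noteq> \<beta> \<longrightarrow> pconst C \<beta>' \<sigma> \<sigma> = 0))"
        by (rule conjunct2[OF conjunct2[OF m]])
    qed
  qed
qed

end
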